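(* Consider the line network model (see context) with $\ell$ links and erasure probabilities $p_1,\dots,p_\ell$ having a unique worst link, i.e. there is $m$ with $p_m=\max_i p_i<1$ and $p_i<p_m$ for $i\ne m$. Let $A:=1-\max_{1\le i\le\ell}p_i$ and fix $\delta\in(0,1/2)$. Then for all sufficiently large $n$, $$\mathbb{P}\!\left[\,|T_n-\mathbb{E}T_n|>\frac{n^{1/2+\delta}}{A}\right]\le \frac{2A}{n}+\frac{2A\,n^{2\delta}}{n^2-n^{1+2\delta}}.$$ In particular (Theorem 2), with $\epsilon_n=n^{3/4}/A$, $\mathbb{P}[|T_n-\mathbb{E}T_n|>\epsilon_n]\le \frac{2A}{n}+o(1/n)$.
   Context: Line network model. Fix integers $\ell\ge1$, $n\ge1$ and erasure probabilities $p_1,\dots,p_\ell\in[0,1)$. Let $\{z_{t,i}: t\ge1,\,1\le i\le\ell\}$ be independent Bernoulli random variables with $\mathbb{P}(z_{t,i}=1)=1-p_i$ ($z_{t,i}=1$ means link $i$ is ON at time step $t$). Nodes $N^{(1)},\dots,N^{(\ell+1)}$, link $i$ from $N^{(i)}$ to $N^{(i+1)}$; the source holds $n$ packets and each node sends random linear combinations of its received packets (idealized so a transmission is innovative whenever possible). The rank $\rho_i(t)$ of node $N^{(i)}$ after $t$ steps satisfies $\rho_1(t)=n$, $\rho_i(0)=0$ for $i\ge2$, and $\rho_{i+1}(t)=\rho_{i+1}(t-1)+z_{t,i}\mathbf 1\{\rho_i(t-1)>\rho_{i+1}(t-1)\}$ for $t\ge1$, $1\le i\le \ell$. The completion time is $T_n:=\min\{t\ge0:\rho_{\ell+1}(t)=n\}$.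 *)

theory Defs
  imports "HOL-Probability.Probability"
begin

text \<open>Rank of node i after t steps, for a fixed realisation zz of the link states:
  zz t i = True means link i is ON at time step t (t \<ge> 1, 1 \<le> i \<le> l).
  Node 1 is the source holding n packets.\<close>
fun rank :: "(nat \<Rightarrow> nat \<Rightarrow> bool) \<Rightarrow> nat \<Rightarrow> nat \<Rightarrow> nat \<Rightarrow> nat" where
  "rank zz n 0 i = (if i \<le> 1 then n else 0)"
| "rank zz n (Suc t) i =
     (if i \<le> 1 then n
      else rank zz n t i +
           (if zz (Suc t) (i - 1) \<and> rank zz n t (i - 1) > rank zz n t i then 1 else 0))"

text \<open>Completion time T_n = min {t. rank of node l+1 at time t equals n};
  set to 0 on the (null) event that this never happens.\<close>
definition completion_time :: "(nat \<Rightarrow> nat \<Rightarrow> bool) \<Rightarrow> nat \<Rightarrow> nat \<Rightarrow> nat" where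
  "completion_time zz l n =
     (if \<exists>t. rank zz n t (Suc l) = n then (LEAST t. rank zz n t (Suc l) = n) else 0)"

end

theory Submission
  imports Defs
begin


definition cnt :: "(nat \<Rightarrow> nat \<Rightarrow> bool) \<Rightarrow> nat \<Rightarrow> nat \<Rightarrow> nat \<Rightarrow> nat" where
  "cnt zz k a b = (\<Sum>u\<in>{a<..b}. if zz u k then 1 else 0)"

lemma cnt_same[simp]: "cnt zz k a a = 0"
  by (simp add: cnt_def)

lemma cnt_Suc: "a \<le> b \<Longrightarrow> cnt zz k a (Suc b) = cnt zz k a b + (if zz (Suc b) k then 1 else 0)"
proof -
  assume "a \<le> b"
  then have "{a<..Suc b} = insert (Suc b) {a<..b}" by auto
  then show ?thesis by (simp add: cnt_def)
qed

lemma rank_source: "i \<le> 1 \<Longrightarrow> rank zz n t i = n"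
  by (cases t) auto

lemma rank_Suc_ge: "rank zz n t i \<le> rank zz n (Suc t) i"
  by (cases "i \<le> 1") (auto simp: rank_source)

lemma rank_mono_t: "t \<le> t' \<Longrightarrow> rank zz n t i \<le> rank zz n t' i"
  using lift_Suc_mono_le[of "\<lambda>t. rank zz n t i"] rank_Suc_ge by metis

lemma rank_le_prev: "rank zz n t (Suc i) \<le> rank zz n t i"
proof (induction t arbitrary: i)
  case 0
  then show ?case by auto
next
  case (Suc t)
  show ?case
  proof (cases "i = 0")
    case True
    then show ?thesis by (simp add: rank_source)
  next
    case False
    have "rank zz n (Suc t) (Suc i) \<le> rank zz n t i"
      using Suc.IH[of i] False by auto
    also have "\<dots> \<le> rank zz n (Suc t) i" by (rule rank_Suc_ge)
    finally show ?thesis .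
  qed
qed

lemma rank_le_n: "rank zz n t i \<le> n"
proof (induction i)
  case 0
  then show ?case by (simp add: rank_source)
next
  case (Suc i)
  then show ?case using rank_le_prev[of zz n t i] by linarith
qed

lemma rank_le_cnt: "k \<ge> 1 \<Longrightarrow> rank zz n t (Suc k) \<le> cnt zz k 0 t"
proof (induction t)
  case 0
  then show ?case by simp
next
  case (Suc t)
  then show ?case by (auto simp: cnt_Suc)
qed

lemma rank_exists:
  assumes "k \<ge> 1"
  shows "rank zz n s (Suc k) \<ge> cnt zz k 0 s \<or>
         (\<exists>r<s. rank zz n s (Suc k) \<ge> rank zz n r k + cnt zz k (Suc r) s)"
proof (induction s)
  case 0
  then show ?case by simp
next
  case (Suc s)
  let ?z = "zz (Suc s) k"
  show ?case
  proof (cases "?z \<and> rank zz n s k > rank zz n s (Suc k)")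
    case True
    then have eq: "rank zz n (Suc s) (Suc k) = rank zz n s (Suc k) + 1" using assms by auto
    from Suc.IH show ?thesis
    proof
      assume "rank zz n s (Suc k) \<ge> cnt zz k 0 s"
      then show ?thesis using True eq by (auto simp: cnt_Suc)
    next
      assume "\<exists>r<s. rank zz n s (Suc k) \<ge> rank zz n r k + cnt zz k (Suc r) s"
      then obtain r where r: "r < s" "rank zz n s (Suc k) \<ge> rank zz n r k + cnt zz k (Suc r) s" by blast
      then have "cnt zz k (Suc r) (Suc s) = cnt zz k (Suc r) s + 1" using True by (simp add: cnt_Suc)
      then show ?thesis using r eq by (intro disjI2 exI[of _ r]) auto
    qed
  next
    case False
    note F = False
    show ?thesis
    proof (cases ?z)
      case True
      then have "rank zz n s k \<le> rank zz n s (Suc k)" using F by auto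
      moreover have "rank zz n (Suc s) (Suc k) = rank zz n s (Suc k)" using F assms by auto
      ultimately show ?thesis by (intro disjI2 exI[of _ s]) auto
    next
      case False
      then have eq: "rank zz n (Suc s) (Suc k) = rank zz n s (Suc k)" using assms by auto
      from Suc.IH show ?thesis
      proof
        assume "rank zz n s (Suc k) \<ge> cnt zz k 0 s"
        then show ?thesis using False eq by (auto simp: cnt_Suc)
      next
        assume "\<exists>r<s. rank zz n s (Suc k) \<ge> rank zz n r k + cnt zz k (Suc r) s"
        then obtain r where r: "r < s" "rank zz n s (Suc k) \<ge> rank zz n r k + cnt zz k (Suc r) s" by blast
        then have "cnt zz k (Suc r) (Suc s) = cnt zz k (Suc r) s" using False by (simp add: cnt_Suc)
        then show ?thesis using r eq by (intro disjI2 exI[of _ r]) auto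
      qed
    qed
  qed
qed

lemma rank_lower:
  fixes A x :: real
  assumes A: "A \<le> 1" and x: "x \<ge> 0"
    and G: "\<forall>k\<in>{1..l}. \<forall>a b. a \<le> b \<longrightarrow> b \<le> t \<longrightarrow> real (cnt zz k a b) \<ge> A * (real b - real a) - x"
  shows "k \<le> l \<Longrightarrow> s \<le> t \<Longrightarrow> real (rank zz n s (Suc k)) \<ge> min (real n) (A * real s - real k * (x + 1))"
proof (induction k arbitrary: s)
  case 0
  then show ?case by (simp add: rank_source)
next
  case (Suc k s)
  have k1: "Suc k \<ge> 1" by simp
  have Gk: "\<And>a b. a \<le> b \<Longrightarrow> b \<le> t \<Longrightarrow> real (cnt zz (Suc k) a b) \<ge> A * (real b - real a) - x"
    using G Suc.prems by auto
  from rank_exists[OF k1, where zz=zz and n=n and s=s] show ?case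
  proof
    assume h: "cnt zz (Suc k) 0 s \<le> rank zz n s (Suc (Suc k))"
    have "A * real s - x \<le> real (cnt zz (Suc k) 0 s)" using Gk[of 0 s] Suc.prems by simp
    moreover have "real (Suc k) * (x + 1) \<ge> x" using x by (simp add: algebra_simps)
    moreover have "real (cnt zz (Suc k) 0 s) \<le> real (rank zz n s (Suc (Suc k)))" using h by simp
    ultimately have "A * real s - real (Suc k) * (x + 1) \<le> real (rank zz n s (Suc (Suc k)))" by linarith
    then show ?thesis by (simp add: min_le_iff_disj)
  next
    assume "\<exists>r<s. rank zz n r (Suc k) + cnt zz (Suc k) (Suc r) s \<le> rank zz n s (Suc (Suc k))"
    then obtain r where r: "r < s" "rank zz n r (Suc k) + cnt zz (Suc k) (Suc r) s \<le> rank zz n s (Suc (Suc k))" by blast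
    have IH: "real (rank zz n r (Suc k)) \<ge> min (real n) (A * real r - real k * (x + 1))"
      using Suc.IH[of r] Suc.prems r by auto
    have C: "real (cnt zz (Suc k) (Suc r) s) \<ge> A * (real s - real (Suc r)) - x"
      using Gk[of "Suc r" s] r Suc.prems by auto
    have R: "real (rank zz n r (Suc k)) + real (cnt zz (Suc k) (Suc r) s) \<le> real (rank zz n s (Suc (Suc k)))"
      using r(2) by (metis of_nat_add of_nat_mono)
    show ?thesis
    proof (cases "real n \<le> A * real r - real k * (x + 1)")
      case True
      then show ?thesis using IH R by (smt (verit) of_nat_0_le_iff)
    next
      case False
      then have "real (rank zz n r (Suc k)) \<ge> A * real r - real k * (x + 1)" using IH by linarith
      then have "real (rank zz n s (Suc (Suc k))) \<ge> A * real r - real k * (x + 1) + A * (real s - real (Suc r)) - x"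
        using R C by linarith
      moreover have "A * real r - real k * (x + 1) + A * (real s - real (Suc r)) - x \<ge> A * real s - real (Suc k) * (x + 1)"
        using A by (simp add: algebra_simps)
      ultimately have "A * real s - real (Suc k) * (x + 1) \<le> real (rank zz n s (Suc (Suc k)))" by linarith
      then show ?thesis by (simp add: min_le_iff_disj)
    qed
  qed
qed


lemma rank_le_index: "i \<le> j \<Longrightarrow> rank zz n t j \<le> rank zz n t i"
proof (induction j)
  case 0
  then show ?case by simp
next
  case (Suc j)
  then show ?case using rank_le_prev[of zz n t j] by (cases "i = Suc j") auto
qed

lemma ct_le: "rank zz n t (Suc l) = n \<Longrightarrow> completion_time zz l n \<le> t"
  unfolding completion_time_def by (auto intro: Least_le)

lemma ct_gt: "completion_time zz l n > t \<Longrightarrow> rank zz n t (Suc l) < n"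
  using ct_le[of zz n t l] rank_le_n[of zz n t "Suc l"] by linarith

lemma ct_reached:
  assumes "\<exists>t. rank zz n t (Suc l) = n"
  shows "rank zz n (completion_time zz l n) (Suc l) = n"
  using assms unfolding completion_time_def by (auto intro: LeastI_ex)

lemma ct_small:
  fixes y :: real
  assumes "real (completion_time zz l n) < y"
  shows "(\<forall>t. rank zz n t (Suc l) < n) \<or> rank zz n (nat \<lfloor>y\<rfloor>) (Suc l) = n"
proof (cases "\<exists>t. rank zz n t (Suc l) = n")
  case True
  have "completion_time zz l n \<le> nat \<lfloor>y\<rfloor>" using assms by linarith
  then have "rank zz n (completion_time zz l n) (Suc l) \<le> rank zz n (nat \<lfloor>y\<rfloor>) (Suc l)"
    by (rule rank_mono_t)
  then show ?thesis using ct_reached[OF True] rank_le_n[of zz n "nat \<lfloor>y\<rfloor>" "Suc l"] by auto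
next
  case False
  then show ?thesis using rank_le_n[of zz n _ "Suc l"] by (metis le_neq_implies_less)
qed

lemma rank_done_cnt:
  assumes "m \<in> {1..l}" "rank zz n t (Suc l) = n"
  shows "n \<le> cnt zz m 0 t"
  using rank_le_index[of "Suc m" "Suc l" zz n t] rank_le_cnt[of m zz n t] assms by auto

lemma good_done:
  fixes A x :: real
  assumes A: "A \<le> 1" and x: "x \<ge> 0"
    and G: "\<forall>k\<in>{1..l}. \<forall>a b. a \<le> b \<longrightarrow> b \<le> t \<longrightarrow> real (cnt zz k a b) \<ge> A * (real b - real a) - x"
    and big: "A * real t - real l * (x + 1) \<ge> real n"
  shows "rank zz n t (Suc l) = n"
proof -
  have "real (rank zz n t (Suc l)) \<ge> min (real n) (A * real t - real l * (x + 1))"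
    by (rule rank_lower[OF A x G]) auto
  then have "real (rank zz n t (Suc l)) \<ge> real n" using big by linarith
  then show ?thesis using rank_le_n[of zz n t "Suc l"] by linarith
qed



locale netw = prob_space M for M :: "'a measure" +
  fixes z :: "nat \<Rightarrow> nat \<Rightarrow> 'a \<Rightarrow> bool" and l :: nat and p :: "nat \<Rightarrow> real"
  assumes l1: "l \<ge> 1"
    and p_range: "\<forall>i\<in>{1..l}. 0 \<le> p i \<and> p i < 1"
    and z_meas: "\<forall>t i. z t i \<in> measurable M (count_space UNIV)"
    and z_indep: "indep_vars (\<lambda>_. count_space UNIV) (\<lambda>(t, i). z t i)
                    {(t, i). 1 \<le> t \<and> 1 \<le> i \<and> i \<le> l}"
    and z_distr: "\<forall>t i. 1 \<le> t \<longrightarrow> 1 \<le> i \<longrightarrow> i \<le> l \<longrightarrow>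
                    measure M {\<omega> \<in> space M. z t i \<omega>} = 1 - p i"
begin

abbreviation Z :: "'a \<Rightarrow> nat \<Rightarrow> nat \<Rightarrow> bool" where "Z \<omega> \<equiv> (\<lambda>t i. z t i \<omega>)"

lemma z_meas' [measurable]: "z t i \<in> measurable M (count_space UNIV)"
  using z_meas by blast

lemma cnt_meas [measurable]: "(\<lambda>\<omega>. cnt (Z \<omega>) k a b) \<in> measurable M (count_space UNIV)"
  unfolding cnt_def by measurable

lemma rank_meas [measurable]: "(\<lambda>\<omega>. rank (Z \<omega>) n t i) \<in> measurable M (count_space UNIV)"
proof (induction t arbitrary: i)
  case 0
  then show ?case by simp
next
  case (Suc t)
  then show ?case by simp measurable
qed

lemma ct_meas [measurable]: "(\<lambda>\<omega>. completion_time (Z \<omega>) l n) \<in> measurable M (count_space UNIV)"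
  unfolding completion_time_def by measurable

lemma ct_meas_real [measurable]: "(\<lambda>\<omega>. real (completion_time (Z \<omega>) l n)) \<in> borel_measurable M"
  by measurable

definition XX :: "nat \<times> nat \<Rightarrow> 'a \<Rightarrow> real" where
  "XX j \<omega> = (if (case j of (t, i) \<Rightarrow> z t i) \<omega> then 1 else 0)"

lemma cnt_as_sum:
  "real (cnt (Z \<omega>) k a b) = (\<Sum>j\<in>(\<lambda>u. (u, k)) ` {a<..b}. XX j \<omega>)"
proof -
  have "(\<Sum>j\<in>(\<lambda>u. (u, k)) ` {a<..b}. XX j \<omega>) = (\<Sum>u\<in>{a<..b}. XX (u, k) \<omega>)"
    by (subst sum.reindex) (auto simp: inj_on_def)
  moreover have "real (cnt (Z \<omega>) k a b) = (\<Sum>u\<in>{a<..b}. XX (u, k) \<omega>)"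
    unfolding cnt_def of_nat_sum by (intro sum.cong) (auto simp: XX_def)
  ultimately show ?thesis by simp
qed

lemma hoeff_setup:
  assumes k: "k \<in> {1..l}" and ab: "a < b"
  shows "Hoeffding_ineq M ((\<lambda>u. (u, k)) ` {a<..b}) XX (\<lambda>_. 0) (\<lambda>_. 1)"
    and "(\<Sum>j\<in>(\<lambda>u. (u, k)) ` {a<..b}. expectation (XX j)) = (1 - p k) * (real b - real a)"
    and "(\<Sum>j\<in>(\<lambda>u. (u, k)) ` {a<..b}. ((\<lambda>_. 1::real) j - (\<lambda>_. 0) j)\<^sup>2) = real b - real a"
proof -
  let ?I = "(\<lambda>u. (u, k)) ` {a<..b}"
  have sub: "?I \<subseteq> {(t, i). 1 \<le> t \<and> 1 \<le> i \<and> i \<le> l}" using k by auto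
  have ind: "indep_vars (\<lambda>_. borel) XX ?I"
  proof -
    have "indep_vars (\<lambda>_. borel) (\<lambda>i x. (\<lambda>_ b. if b then 1 else 0 :: real) i ((\<lambda>(t, i). z t i) i x)) ?I"
      by (rule indep_vars_compose2[OF indep_vars_subset[OF z_indep sub]]) auto
    then show ?thesis unfolding XX_def[abs_def] by simp
  qed
  have card: "card ?I = b - a" by (subst card_image) (auto simp: inj_on_def)
  have E: "expectation (XX j) = 1 - p k" if jI: "j \<in> ?I" for j
  proof -
    from jI obtain u where u0: "u \<in> {a<..b}" "j = (u, k)" by blast
    then have u: "j = (u, k)" "a < u" by auto
    have "expectation (XX j) = expectation (indicator {\<omega>\<in>space M. z u k \<omega>})"
      by (intro Bochner_Integration.integral_cong) (auto simp: XX_def u indicator_def)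
    also have "\<dots> = measure M {\<omega>\<in>space M. z u k \<omega>}" by simp
    also have "\<dots> = 1 - p k" using z_distr u(2) k by simp
    finally show ?thesis .
  qed
  have mu: "(\<Sum>j\<in>?I. expectation (XX j)) = (1 - p k) * (real b - real a)"
  proof -
    have "(\<Sum>j\<in>?I. expectation (XX j)) = (\<Sum>j\<in>?I. 1 - p k)" by (rule sum.cong) (use E in auto)
    also have "\<dots> = real (card ?I) * (1 - p k)" by simp
    finally show ?thesis using card ab by (simp add: of_nat_diff)
  qed
  show "Hoeffding_ineq M ?I XX (\<lambda>_. 0) (\<lambda>_. 1)"
  proof -
    have "indep_interval_bounded_random_variables M ?I XX (\<lambda>_. 0) (\<lambda>_. 1)"
      by unfold_locales (use ind in \<open>auto simp: XX_def\<close>)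
    then show ?thesis by (simp add: Hoeffding_ineq_def)
  qed
  show "(\<Sum>j\<in>?I. expectation (XX j)) = (1 - p k) * (real b - real a)" by (rule mu)
  show "(\<Sum>j\<in>?I. ((\<lambda>_. 1::real) j - (\<lambda>_. 0) j)\<^sup>2) = real b - real a"
    using card ab by (simp add: of_nat_diff)
qed

lemma cnt_lower_tail:
  assumes k: "k \<in> {1..l}" and ab: "a < b" and e: "\<epsilon> \<ge> 0"
  shows "prob {\<omega>\<in>space M. real (cnt (Z \<omega>) k a b) \<le> (1 - p k) * (real b - real a) - \<epsilon>}
           \<le> exp (-2 * \<epsilon>\<^sup>2 / (real b - real a))"
proof -
  interpret H: Hoeffding_ineq M "(\<lambda>u. (u, k)) ` {a<..b}" XX "\<lambda>_. 0" "\<lambda>_. 1" "\<Sum>j\<in>(\<lambda>u. (u, k)) ` {a<..b}. expectation (XX j)"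
    by (rule hoeff_setup(1)[OF k ab]) (rule reflexive)
  show ?thesis
    using H.Hoeffding_ineq_le[OF e] ab unfolding hoeff_setup(2,3)[OF k ab] cnt_as_sum by simp
qed

lemma cnt_upper_tail:
  assumes k: "k \<in> {1..l}" and ab: "a < b" and e: "\<epsilon> \<ge> 0"
  shows "prob {\<omega>\<in>space M. real (cnt (Z \<omega>) k a b) \<ge> (1 - p k) * (real b - real a) + \<epsilon>}
           \<le> exp (-2 * \<epsilon>\<^sup>2 / (real b - real a))"
proof -
  interpret H: Hoeffding_ineq M "(\<lambda>u. (u, k)) ` {a<..b}" XX "\<lambda>_. 0" "\<lambda>_. 1" "\<Sum>j\<in>(\<lambda>u. (u, k)) ` {a<..b}. expectation (XX j)"
    by (rule hoeff_setup(1)[OF k ab]) (rule reflexive)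
  show ?thesis
    using H.Hoeffding_ineq_ge[OF e] ab unfolding hoeff_setup(2,3)[OF k ab] cnt_as_sum by simp
qed


definition AA :: real where "AA = 1 - Max (p ` {1..l})"

lemma AA_facts: "0 < AA" "AA \<le> 1" "\<And>k. k \<in> {1..l} \<Longrightarrow> AA \<le> 1 - p k" "\<exists>m\<in>{1..l}. AA = 1 - p m"
proof -
  have fin: "finite (p ` {1..l})" and ne: "p ` {1..l} \<noteq> {}" using l1 by auto
  obtain m where m: "m \<in> {1..l}" "Max (p ` {1..l}) = p m" using Max_in[OF fin ne] by auto
  show "\<exists>m\<in>{1..l}. AA = 1 - p m" using m by (auto simp: AA_def)
  show "0 < AA" using m p_range by (auto simp: AA_def)
  show "AA \<le> 1" using m p_range by (auto simp: AA_def)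
  show "AA \<le> 1 - p k" if "k \<in> {1..l}" for k
    using Max_ge[OF fin, of "p k"] that by (auto simp: AA_def)
qed

definition Gd :: "'a \<Rightarrow> nat \<Rightarrow> real \<Rightarrow> bool" where
  "Gd \<omega> t x \<longleftrightarrow> (\<forall>k\<in>{1..l}. \<forall>a b. a \<le> b \<longrightarrow> b \<le> t \<longrightarrow>
      real (cnt (Z \<omega>) k a b) \<ge> (1 - p k) * (real b - real a) - x)"

lemma Gd_done:
  assumes "Gd \<omega> t x" "x \<ge> 0" "AA * real t - real l * (x + 1) \<ge> real n"
  shows "rank (Z \<omega>) n t (Suc l) = n"
proof (rule good_done[OF AA_facts(2) assms(2) _ assms(3)])
  show "\<forall>k\<in>{1..l}. \<forall>a b. a \<le> b \<longrightarrow> b \<le> t \<longrightarrow> AA * (real b - real a) - x \<le> real (cnt (Z \<omega>) k a b)"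
  proof (intro ballI allI impI)
    fix k a b assume k: "k \<in> {1..l}" and ab: "a \<le> b" "b \<le> t"
    have "AA * (real b - real a) \<le> (1 - p k) * (real b - real a)"
      using AA_facts(3)[OF k] ab by (intro mult_right_mono) auto
    then show "AA * (real b - real a) - x \<le> real (cnt (Z \<omega>) k a b)"
      using assms(1) k ab unfolding Gd_def by force
  qed
qed

definition Ev :: "real \<Rightarrow> nat \<times> nat \<times> nat \<Rightarrow> 'a set" where
  "Ev x j = (case j of (k, a, b) \<Rightarrow>
     {\<omega>\<in>space M. a < b \<and> real (cnt (Z \<omega>) k a b) \<le> (1 - p k) * (real b - real a) - x})"

lemma Ev_sets: "Ev x j \<in> sets M"
  unfolding Ev_def by (cases j) (simp, measurable)

lemma badG:
  assumes t: "t \<ge> 1" and x: "x \<ge> 0"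
  shows "prob {\<omega>\<in>space M. \<not> Gd \<omega> t x} \<le> real l * (real t + 1)^2 * exp (-2 * x\<^sup>2 / real t)"
proof -
  let ?S = "{1..l} \<times> {..t} \<times> {..t}"
  have sub: "{\<omega>\<in>space M. \<not> Gd \<omega> t x} \<subseteq> (\<Union>j\<in>?S. Ev x j)"
  proof
    fix \<omega> assume "\<omega> \<in> {\<omega>\<in>space M. \<not> Gd \<omega> t x}"
    then obtain k a b where w: "\<omega> \<in> space M" "k \<in> {1..l}" "a \<le> b" "b \<le> t"
      "real (cnt (Z \<omega>) k a b) < (1 - p k) * (real b - real a) - x"
      unfolding Gd_def by force
    have "a \<noteq> b" using w(5) x by (cases "a = b") auto
    then have "\<omega> \<in> Ev x (k, a, b)" using w unfolding Ev_def by auto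
    moreover have "(k, a, b) \<in> ?S" using w by auto
    ultimately show "\<omega> \<in> (\<Union>j\<in>?S. Ev x j)" by blast
  qed
  have each: "prob (Ev x j) \<le> exp (-2 * x\<^sup>2 / real t)" if j: "j \<in> ?S" for j
  proof -
    obtain k a b where jj: "j = (k, a, b)" and k: "k \<in> {1..l}" and b: "b \<le> t" using j by auto
    show ?thesis
    proof (cases "a < b")
      case True
      have "prob (Ev x j) = prob {\<omega>\<in>space M. real (cnt (Z \<omega>) k a b) \<le> (1 - p k) * (real b - real a) - x}"
        using True by (simp add: Ev_def jj)
      also have "\<dots> \<le> exp (-2 * x\<^sup>2 / (real b - real a))" by (rule cnt_lower_tail[OF k True x])
      also have "\<dots> \<le> exp (-2 * x\<^sup>2 / real t)"
      proof -
        have "0 < real b - real a" using True by simp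
        moreover have "real b - real a \<le> real t" using b by simp
        ultimately have "2 * x\<^sup>2 / real t \<le> 2 * x\<^sup>2 / (real b - real a)"
          by (intro divide_left_mono) auto
        then show ?thesis by simp
      qed
      finally show ?thesis .
    next
      case False
      then have "Ev x j = {}" by (simp add: Ev_def jj)
      then show ?thesis by simp
    qed
  qed
  have "prob {\<omega>\<in>space M. \<not> Gd \<omega> t x} \<le> prob (\<Union>j\<in>?S. Ev x j)"
    by (rule finite_measure_mono[OF sub]) (auto intro: Ev_sets)
  also have "\<dots> \<le> (\<Sum>j\<in>?S. prob (Ev x j))"
    by (rule finite_measure_subadditive_finite) (auto intro: Ev_sets)
  also have "\<dots> \<le> (\<Sum>j\<in>?S. exp (-2 * x\<^sup>2 / real t))" by (rule sum_mono) (rule each)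
  also have "\<dots> = real l * (real t + 1)^2 * exp (-2 * x\<^sup>2 / real t)"
    by (simp add: card_cartesian_product power2_eq_square algebra_simps)
  finally show ?thesis .
qed


abbreviation ct :: "nat \<Rightarrow> 'a \<Rightarrow> nat" where "ct n \<omega> \<equiv> completion_time (Z \<omega>) l n"

lemma ct_upper_event:
  assumes "x \<ge> 0" "AA * real t - real l * (x + 1) \<ge> real n"
  shows "{\<omega>\<in>space M. ct n \<omega> > t} \<subseteq> {\<omega>\<in>space M. \<not> Gd \<omega> t x}"
  using Gd_done[OF _ assms] ct_le by fastforce

lemma ct_tail:
  assumes "t \<ge> 1" "x \<ge> 0" "AA * real t - real l * (x + 1) \<ge> real n"
  shows "prob {\<omega>\<in>space M. ct n \<omega> > t} \<le> real l * (real t + 1)^2 * exp (-2 * x\<^sup>2 / real t)"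
proof -
  have "prob {\<omega>\<in>space M. ct n \<omega> > t} \<le> prob {\<omega>\<in>space M. \<not> Gd \<omega> t x}"
    by (rule finite_measure_mono[OF ct_upper_event[OF assms(2,3)]]) (unfold Gd_def, measurable)
  also have "\<dots> \<le> real l * (real t + 1)^2 * exp (-2 * x\<^sup>2 / real t)" by (rule badG[OF assms(1,2)])
  finally show ?thesis .
qed

lemma ct_lower_event:
  fixes y :: real
  assumes "x \<ge> 0" "AA * real t - real l * (x + 1) \<ge> real n" "m \<in> {1..l}"
  shows "{\<omega>\<in>space M. real (ct n \<omega>) < y} \<subseteq>
           {\<omega>\<in>space M. \<not> Gd \<omega> t x} \<union> {\<omega>\<in>space M. n \<le> cnt (Z \<omega>) m 0 (nat \<lfloor>y\<rfloor>)}"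
proof
  fix \<omega> assume w: "\<omega> \<in> {\<omega>\<in>space M. real (ct n \<omega>) < y}"
  show "\<omega> \<in> {\<omega>\<in>space M. \<not> Gd \<omega> t x} \<union> {\<omega>\<in>space M. n \<le> cnt (Z \<omega>) m 0 (nat \<lfloor>y\<rfloor>)}"
  proof (cases "Gd \<omega> t x")
    case True
    then have r: "rank (Z \<omega>) n t (Suc l) = n" using Gd_done assms by blast
    from w have "(\<forall>t. rank (Z \<omega>) n t (Suc l) < n) \<or> rank (Z \<omega>) n (nat \<lfloor>y\<rfloor>) (Suc l) = n"
      using ct_small by blast
    then have "rank (Z \<omega>) n (nat \<lfloor>y\<rfloor>) (Suc l) = n" using r by (metis less_irrefl)
    then have "n \<le> cnt (Z \<omega>) m 0 (nat \<lfloor>y\<rfloor>)" by (rule rank_done_cnt[OF assms(3)])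
    then show ?thesis using w by auto
  next
    case False
    then show ?thesis using w by auto
  qed
qed

lemma cnt_big:
  assumes m: "m \<in> {1..l}" "AA = 1 - p m" and s: "s \<ge> 1" and e: "real n - AA * real s \<ge> 0"
  shows "prob {\<omega>\<in>space M. n \<le> cnt (Z \<omega>) m 0 s} \<le> exp (-2 * (real n - AA * real s)\<^sup>2 / real s)"
proof -
  have "{\<omega>\<in>space M. n \<le> cnt (Z \<omega>) m 0 s} =
        {\<omega>\<in>space M. real (cnt (Z \<omega>) m 0 s) \<ge> (1 - p m) * (real s - real 0) + (real n - AA * real s)}"
    using m by auto
  also have "prob \<dots> \<le> exp (-2 * (real n - AA * real s)\<^sup>2 / (real s - real 0))"
    by (rule cnt_upper_tail[OF m(1) _ e]) (use s in auto)
  finally show ?thesis by simp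
qed

lemma exp_upper:
  fixes tp N :: nat and K q :: real
  assumes tpN: "tp \<le> N" and q: "0 \<le> q" "q < 1" and K: "K \<ge> 0"
    and tail: "\<And>t. t \<ge> N \<Longrightarrow> prob {\<omega>\<in>space M. ct n \<omega> > t} \<le> K * q ^ t"
  shows "integrable M (\<lambda>\<omega>. real (ct n \<omega>))"
    and "expectation (\<lambda>\<omega>. real (ct n \<omega>)) \<le> real tp + real N * prob {\<omega>\<in>space M. ct n \<omega> > tp} + K / (1 - q)"
proof -
  define S where "S j = {\<omega>\<in>space M. ct n \<omega> > N + j}" for j
  define S0 where "S0 = {\<omega>\<in>space M. ct n \<omega> > tp}"
  have S_sets[measurable]: "S j \<in> sets M" for j unfolding S_def by measurable
  have S0_sets[measurable]: "S0 \<in> sets M" unfolding S0_def by measurable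
  have pw: "ennreal (real (ct n \<omega>)) \<le> ennreal (real tp) + ennreal (real N) * indicator S0 \<omega> + (\<Sum>j. indicator (S j) \<omega>)"
    if w: "\<omega> \<in> space M" for \<omega>
  proof (cases "ct n \<omega> \<le> N")
    case True
    show ?thesis
    proof (cases "ct n \<omega> \<le> tp")
      case True
      then have "ennreal (real (ct n \<omega>)) \<le> ennreal (real tp)" by simp
      also have "\<dots> \<le> ennreal (real tp) + ennreal (real N) * indicator S0 \<omega> + (\<Sum>j. indicator (S j) \<omega>)"
        by (simp add: add.assoc)
      finally show ?thesis .
    next
      case False
      then have "\<omega> \<in> S0" using w by (simp add: S0_def)
      then have "ennreal (real tp) + ennreal (real N) * indicator S0 \<omega> = ennreal (real tp + real N)"
        by (simp add: ennreal_plus)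
      moreover have "ennreal (real (ct n \<omega>)) \<le> ennreal (real tp + real N)" using True by (intro ennreal_leI) simp
      ultimately have h1: "ennreal (real (ct n \<omega>)) \<le> ennreal (real tp) + ennreal (real N) * indicator S0 \<omega>"
        by metis
      have "ennreal (real tp) + ennreal (real N) * indicator S0 \<omega> \<le>
         ennreal (real tp) + ennreal (real N) * indicator S0 \<omega> + (\<Sum>j. indicator (S j) \<omega>)"
        by (rule add_increasing2) auto
      with h1 show ?thesis by (rule order_trans)
    qed
  next
    case False
    then have "\<omega> \<in> S0" using w tpN by (simp add: S0_def)
    have "(\<Sum>j<ct n \<omega> - N. indicator (S j) \<omega> :: ennreal) = (\<Sum>j<ct n \<omega> - N. 1)"
      by (rule sum.cong) (use w in \<open>auto simp: S_def\<close>)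
    then have "ennreal (real (ct n \<omega> - N)) = (\<Sum>j<ct n \<omega> - N. indicator (S j) \<omega> :: ennreal)"
      by (simp add: ennreal_of_nat_eq_real_of_nat)
    also have "\<dots> \<le> (\<Sum>j. indicator (S j) \<omega>)" by (rule sum_le_suminf) auto
    finally have A1: "ennreal (real (ct n \<omega> - N)) \<le> (\<Sum>j. indicator (S j) \<omega>)" .
    have "ennreal (real (ct n \<omega>)) = ennreal (real N) + ennreal (real (ct n \<omega> - N))"
      using False by (simp add: ennreal_plus[symmetric] of_nat_diff)
    also have "\<dots> \<le> ennreal (real N) + (\<Sum>j. indicator (S j) \<omega>)" using A1 by (rule add_left_mono)
    also have "\<dots> \<le> ennreal (real tp) + ennreal (real N) * indicator S0 \<omega> + (\<Sum>j. indicator (S j) \<omega>)"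
      using \<open>\<omega> \<in> S0\<close> by simp
    finally show ?thesis .
  qed
  have "(\<integral>\<^sup>+\<omega>. ennreal (real (ct n \<omega>)) \<partial>M) \<le>
        (\<integral>\<^sup>+\<omega>. ennreal (real tp) + ennreal (real N) * indicator S0 \<omega> + (\<Sum>j. indicator (S j) \<omega>) \<partial>M)"
    by (rule nn_integral_mono) (rule pw)
  also have "\<dots> = ennreal (real tp) + ennreal (real N) * emeasure M S0 + (\<Sum>j. emeasure M (S j))"
    by (simp add: nn_integral_add nn_integral_cmult nn_integral_suminf emeasure_space_1)
  also have "(\<Sum>j. emeasure M (S j)) \<le> ennreal (K / (1 - q))"
  proof -
    have "(\<Sum>j. emeasure M (S j)) \<le> (\<Sum>j. ennreal (K * q ^ N * q ^ j))"
    proof (rule suminf_le)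
      fix j
      have "prob (S j) \<le> K * q ^ (N + j)" unfolding S_def by (rule tail) simp
      then show "emeasure M (S j) \<le> ennreal (K * q ^ N * q ^ j)"
        by (simp add: emeasure_eq_measure power_add mult.assoc ennreal_leI)
    qed auto
    also have "(\<Sum>j. ennreal (K * q ^ N * q ^ j)) = ennreal (\<Sum>j. K * q ^ N * q ^ j)"
      using q K by (intro suminf_ennreal2 summable_mult summable_geometric) auto
    also have "(\<Sum>j. K * q ^ N * q ^ j) = K * q ^ N / (1 - q)"
      using q by (simp add: suminf_mult suminf_geometric summable_geometric)
    also have "\<dots> \<le> K / (1 - q)"
      using q K by (intro divide_right_mono mult_left_le power_le_one) auto
    finally show ?thesis by (simp add: ennreal_leI)
  qed
  finally have "(\<integral>\<^sup>+\<omega>. ennreal (real (ct n \<omega>)) \<partial>M) \<le>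
      ennreal (real tp) + ennreal (real N) * emeasure M S0 + ennreal (K / (1 - q))"
    by (simp add: add_left_mono)
  also have "\<dots> = ennreal (real tp + real N * prob S0 + K / (1 - q))"
    using q K by (simp add: emeasure_eq_measure ennreal_mult ennreal_plus[symmetric])
  finally have B: "(\<integral>\<^sup>+\<omega>. ennreal (real (ct n \<omega>)) \<partial>M) \<le> ennreal (real tp + real N * prob S0 + K / (1 - q))" .
  show I: "integrable M (\<lambda>\<omega>. real (ct n \<omega>))"
    by (rule integrableI_nonneg) (use B in \<open>auto simp: top_unique less_top[symmetric]\<close>)
  have "ennreal (expectation (\<lambda>\<omega>. real (ct n \<omega>))) = (\<integral>\<^sup>+\<omega>. ennreal (real (ct n \<omega>)) \<partial>M)"
    by (rule nn_integral_eq_integral[OF I, symmetric]) auto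
  with B have "ennreal (expectation (\<lambda>\<omega>. real (ct n \<omega>))) \<le> ennreal (real tp + real N * prob S0 + K / (1 - q))" by simp
  then show "expectation (\<lambda>\<omega>. real (ct n \<omega>)) \<le> real tp + real N * prob {\<omega>\<in>space M. ct n \<omega> > tp} + K / (1 - q)"
    unfolding S0_def using q K by (subst (asm) ennreal_le_iff) (auto intro!: add_nonneg_nonneg)
qed

lemma exp_lower:
  fixes y :: real
  assumes I: "integrable M (\<lambda>\<omega>. real (ct n \<omega>))" and y: "y \<ge> 0"
  shows "expectation (\<lambda>\<omega>. real (ct n \<omega>)) \<ge> y * (1 - prob {\<omega>\<in>space M. real (ct n \<omega>) < y})"
proof -
  let ?S = "{\<omega>\<in>space M. real (ct n \<omega>) \<ge> y}"
  have Ss[measurable]: "?S \<in> sets M" by measurable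
  have Ii: "integrable M (\<lambda>\<omega>. y * indicator ?S \<omega>)"
    by (intro integrable_mult_right integrable_real_indicator) (auto simp: less_top[symmetric])
  have "expectation (\<lambda>\<omega>. y * indicator ?S \<omega>) \<le> expectation (\<lambda>\<omega>. real (ct n \<omega>))"
    by (rule integral_mono[OF Ii I]) (auto simp: indicator_def)
  moreover have "expectation (\<lambda>\<omega>. y * indicator ?S \<omega>) = y * expectation (indicator ?S)"
    by (rule integral_mult_right_zero)
  moreover have "expectation (indicator ?S) = prob ?S"
    using Bochner_Integration.integral_indicator[of M ?S] by (simp add: Int_absorb2)
  moreover have "?S = space M - {\<omega>\<in>space M. real (ct n \<omega>) < y}" by auto
  then have "prob ?S = 1 - prob {\<omega>\<in>space M. real (ct n \<omega>) < y}"
    by (simp add: prob_compl)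
  ultimately show ?thesis by (simp only:)
qed

end


lemma exp_poly_bound:
  fixes \<kappa> \<epsilon> :: real
  assumes k: "\<kappa> > 0" and e: "\<epsilon> > 0"
  shows "\<exists>D>0. \<forall>y::real. y \<ge> 1 \<longrightarrow> exp (- \<kappa> * y powr \<epsilon>) \<le> D / y ^ 4"
proof -
  define K :: nat where "K = nat \<lceil>4 / \<epsilon>\<rceil> + 1"
  have K0: "K > 0" by (simp add: K_def)
  have KE: "real K * \<epsilon> \<ge> 4"
  proof -
    have "real K \<ge> 4 / \<epsilon>" unfolding K_def by linarith
    then show ?thesis using e by (simp add: field_simps)
  qed
  define D where "D = (real K / \<kappa>) ^ K"
  have D0: "D > 0" using k K0 by (simp add: D_def)
  show ?thesis
  proof (intro exI[of _ D] conjI allI impI D0)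
    fix y :: real assume y: "y \<ge> 1"
    define u where "u = \<kappa> * y powr \<epsilon>"
    have u0: "u \<ge> 0" using k y by (simp add: u_def)
    have "(u / real K) ^ K \<le> (1 + u / real K) ^ K"
      using u0 by (intro power_mono) auto
    also have "\<dots> \<le> exp u" by (rule exp_ge_one_plus_x_over_n_power_n) (use u0 K0 in auto)
    finally have E1: "(u / real K) ^ K \<le> exp u" .
    have "u / real K = \<kappa> / real K * y powr \<epsilon>" by (simp add: u_def)
    then have P1: "(u / real K) ^ K = (\<kappa> / real K) ^ K * (y powr \<epsilon>) ^ K"
      by (simp only: power_mult_distrib)
    have "(y powr \<epsilon>) ^ K = (y powr \<epsilon>) powr (real K)"
      using y by (subst powr_realpow) auto
    also have "\<dots> = y powr (\<epsilon> * real K)" by (rule powr_powr)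
    finally have P2: "(y powr \<epsilon>) ^ K = y powr (\<epsilon> * real K)" .
    have P3: "y powr 4 \<le> y powr (\<epsilon> * real K)"
      using y KE by (intro powr_mono) (auto simp: mult.commute)
    have "(\<kappa> / real K) ^ K * y powr 4 \<le> (\<kappa> / real K) ^ K * (y powr \<epsilon>) ^ K"
      unfolding P2 using P3 k by (intro mult_left_mono) auto
    then have "(\<kappa> / real K) ^ K * y powr 4 \<le> exp u" using E1 P1 by linarith
    moreover have "y powr 4 = y ^ 4" using y by (simp add: powr_realpow)
    ultimately have E2: "(\<kappa> / real K) ^ K * y ^ 4 \<le> exp u" by simp
    have pos: "(\<kappa> / real K) ^ K * y ^ 4 > 0" using k K0 y by simp
    have "exp (- \<kappa> * y powr \<epsilon>) = 1 / exp u" by (simp add: u_def exp_minus field_simps)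
    also have "\<dots> \<le> 1 / ((\<kappa> / real K) ^ K * y ^ 4)"
      using E2 pos by (intro divide_left_mono) auto
    also have "\<dots> = D / y ^ 4" using k K0 by (simp add: D_def power_divide field_simps)
    finally show "exp (- \<kappa> * y powr \<epsilon>) \<le> D / y ^ 4" .
  qed
qed

lemma poly_geo_bound:
  fixes \<beta> :: real
  assumes b: "\<beta> > 0"
  shows "\<exists>C>0. \<forall>t::nat. (real t + 1)^2 * exp (- \<beta> * real t) \<le> C * exp (- \<beta> / 2) ^ t"
proof -
  define m where "m = min 1 (\<beta> / 4)"
  have m0: "m > 0" using b by (simp add: m_def)
  show ?thesis
  proof (intro exI[of _ "1 / m^2"] conjI allI)
    show "1 / m^2 > 0" using m0 by simp
    fix t :: nat
    have "m * (real t + 1) \<le> 1 + \<beta> * real t / 4"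
    proof -
      have "m * real t \<le> \<beta> / 4 * real t" by (intro mult_right_mono) (auto simp: m_def)
      moreover have "m \<le> 1" by (simp add: m_def)
      ultimately show ?thesis by (simp add: algebra_simps)
    qed
    then have "(m * (real t + 1))^2 \<le> (1 + \<beta> * real t / 4)^2"
      using m0 by (intro power_mono) auto
    also have "(1 + \<beta> * real t / 4)^2 = (1 + (\<beta> * real t / 2) / real (2::nat))^2" by simp
    also have "\<dots> \<le> exp (\<beta> * real t / 2)"
    proof (rule exp_ge_one_plus_x_over_n_power_n)
      have "\<beta> * real t \<ge> 0" using b by simp
      then show "\<beta> * real t / 2 \<ge> - real 2" by simp
    qed simp
    finally have h: "m^2 * (real t + 1)^2 \<le> exp (\<beta> * real t / 2)" by (simp add: power_mult_distrib)
    have "(real t + 1)^2 \<le> exp (\<beta> * real t / 2) / m^2"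
      using h m0 by (simp add: field_simps)
    then have "(real t + 1)^2 * exp (- \<beta> * real t) \<le> exp (\<beta> * real t / 2) / m^2 * exp (- \<beta> * real t)"
      by (intro mult_right_mono) auto
    also have "\<dots> = 1 / m^2 * exp (- \<beta> * real t / 2)"
      by (simp add: field_simps exp_add[symmetric])
    also have "exp (- \<beta> * real t / 2) = exp (- \<beta> / 2) ^ t"
      by (subst exp_of_nat_mult[symmetric]) (simp add: field_simps)
    finally show "(real t + 1)^2 * exp (- \<beta> * real t) \<le> 1 / m^2 * exp (- \<beta> / 2) ^ t" .
  qed
qed



context netw begin

theorem conc:
  assumes d: "0 < \<delta>" "\<delta> < 1/2"
  shows "\<forall>\<^sub>F n in sequentially. prob {\<omega>\<in>space M. \<bar>real (ct n \<omega>) - expectation (\<lambda>\<omega>'. real (ct n \<omega>'))\<bar>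
             > real n powr (1/2 + \<delta>) / AA} \<le> 2 * AA / real n"
proof -
  obtain m where m: "m \<in> {1..l}" "AA = 1 - p m" using AA_facts(4) by blast
  define A where "A = AA"
  define L where "L = real l"
  have A0: "A > 0" and A1: "A \<le> 1" using AA_facts unfolding A_def by auto
  have L1: "L \<ge> 1" using l1 unfolding L_def by simp
  define \<kappa> where "\<kappa> = A / (64 * L^2)"
  have \<kappa>0: "\<kappa> > 0" using A0 L1 by (simp add: \<kappa>_def)
  obtain D where D0: "D > 0" and D: "\<And>y. y \<ge> 1 \<Longrightarrow> exp (- \<kappa> * y powr (2*\<delta>)) \<le> D / y ^ 4"
    using exp_poly_bound[OF \<kappa>0, of "2*\<delta>"] d by auto
  define \<beta> where "\<beta> = A^2 / (8 * L^2)"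
  have \<beta>0: "\<beta> > 0" using A0 L1 by (simp add: \<beta>_def)
  obtain C where C0: "C > 0" and C: "\<And>t. (real t + 1)^2 * exp (- \<beta> * real t) \<le> C * exp (- \<beta> / 2) ^ t"
    using poly_geo_bound[OF \<beta>0] by auto
  define q where "q = exp (- \<beta> / 2)"
  have q0: "0 \<le> q" "q < 1" using \<beta>0 by (auto simp: q_def)
  define K where "K = L * C"
  have K0: "K \<ge> 0" using L1 C0 by (simp add: K_def)
  define KQ where "KQ = K / (1 - q)"
  have KQ0: "KQ \<ge> 0" using K0 q0 by (simp add: KQ_def)
  define K1 where "K1 = 9 * L * D / A^2 + D"
  have K10: "K1 > 0" using D0 L1 A0 by (simp add: K1_def add_pos_pos)
  define R where "R = 8 * L + 4 + 2 * (2 + KQ)"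
  define n0 where "n0 = nat \<lceil>max (max 2 (2 + 4 * L / A)) (max (3 * K1 / A) (R^2))\<rceil>"
  show ?thesis
  proof (rule eventually_sequentiallyI[of n0])
    fix n assume nn0: "n0 \<le> n"
    have n_ge: "real n \<ge> max (max 2 (2 + 4 * L / A)) (max (3 * K1 / A) (R^2))"
      using nn0 unfolding n0_def by linarith
    have n2: "real n \<ge> 2" and n3: "real n \<ge> 2 + 4 * L / A" and n4: "real n \<ge> 3 * K1 / A"
      and n5: "real n \<ge> R^2" using n_ge by auto
    have npos: "real n > 0" using n2 by simp
    have R0: "R \<ge> 0" using L1 KQ0 by (simp add: R_def)
    have sq: "sqrt (real n) \<ge> R" using n5 R0 real_le_rsqrt by blast
    define P where "P = real n powr (1/2 + \<delta>)"
    have P_sq: "P \<ge> sqrt (real n)"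
    proof -
      have "real n powr (1/2) \<le> real n powr (1/2 + \<delta>)" using n2 d by (intro powr_mono) auto
      then show ?thesis by (simp add: P_def powr_half_sqrt)
    qed
    have P_le: "P \<le> real n"
    proof -
      have "real n powr (1/2 + \<delta>) \<le> real n powr 1" using n2 d by (intro powr_mono) auto
      then show ?thesis by (simp add: P_def)
    qed
    have P2: "P^2 = real n * real n powr (2 * \<delta>)"
    proof -
      have "P^2 = real n powr (2 * (1/2 + \<delta>))" unfolding P_def using npos
        by (simp add: powr_realpow[symmetric] powr_powr mult.commute)
      also have "\<dots> = real n powr (1 + 2 * \<delta>)" by (simp add: algebra_simps)
      also have "\<dots> = real n * real n powr (2 * \<delta>)" using npos by (simp add: powr_add)
      finally show ?thesis .
    qed
    define c where "c = real n / A"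
    define w where "w = P / (4 * A)"
    have c_ge_n: "c \<ge> real n" using A0 A1 npos by (simp add: c_def field_simps)
    have w_le: "w \<le> c / 4" using P_le A0 by (simp add: w_def c_def field_simps)
    have P0: "P \<ge> 0" unfolding P_def by simp
    have w_ge: "w \<ge> P / 4" unfolding w_def using A0 A1 P0 by (intro divide_left_mono) auto
    have PR: "P \<ge> R" using P_sq sq by linarith
    have w1: "w \<ge> 1" using w_ge PR L1 KQ0 by (simp add: R_def)
    have w2: "2 + KQ \<le> 2 * w" using w_ge PR L1 by (simp add: R_def)
    have L8: "8 * L \<le> P" using PR KQ0 by (simp add: R_def)
    define tp where "tp = nat \<lceil>c + w\<rceil>"
    have tp_ge: "real tp \<ge> c + w" unfolding tp_def by linarith
    have tp_le: "real tp \<le> c + w + 1" unfolding tp_def using w1 c_ge_n npos by linarith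
    have tp_2c: "real tp \<le> 2 * c" using tp_le w_le c_ge_n n2 by linarith
    have tp1: "tp \<ge> 1" using tp_ge w1 c_ge_n npos by linarith
    define x1 where "x1 = P / (8 * L)"
    have x10: "x1 \<ge> 0" using L1 P0 unfolding x1_def by simp
    have condA: "AA * real tp - real l * (x1 + 1) \<ge> real n"
    proof -
      have "A * real tp \<ge> A * (c + w)" using tp_ge A0 by (intro mult_left_mono) auto
      also have "A * (c + w) = real n + P / 4" using A0 by (simp add: c_def w_def field_simps)
      finally have "A * real tp \<ge> real n + P / 4" .
      moreover have "L * (x1 + 1) = P / 8 + L" using L1 by (simp add: x1_def field_simps)
      ultimately show ?thesis using L8 unfolding A_def L_def by linarith
    qed
    have expB: "exp (- \<kappa> * real n powr (2 * \<delta>)) \<le> D / real n ^ 4" using D n2 by simp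
    have PB1: "real l * (real tp + 1)^2 * exp (-2 * x1\<^sup>2 / real tp) \<le> 9 * L * D / (A^2 * real n^2)"
    proof -
      have tp0: "real tp > 0" using tp1 by simp
      have "2 * x1\<^sup>2 / real tp \<ge> 2 * x1\<^sup>2 / (2 * c)"
        using tp_2c tp0 by (intro divide_left_mono) auto
      also have "2 * x1\<^sup>2 / (2 * c) = \<kappa> * real n powr (2 * \<delta>)"
        using A0 L1 npos P2 by (simp add: x1_def c_def \<kappa>_def power_divide field_simps power2_eq_square)
      finally have e1: "exp (-2 * x1\<^sup>2 / real tp) \<le> exp (- \<kappa> * real n powr (2 * \<delta>))" by simp
      have t1: "(real tp + 1)^2 \<le> (3 * c)^2"
        using tp_le w_le c_ge_n n2 by (intro power_mono) auto
      have "real l * (real tp + 1)^2 * exp (-2 * x1\<^sup>2 / real tp) \<le> L * (3 * c)^2 * (D / real n ^ 4)"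
      proof -
        have e2: "exp (-2 * x1\<^sup>2 / real tp) \<le> D / real n ^ 4" using e1 expB by linarith
        have "real l * (real tp + 1)^2 \<le> L * (3 * c)^2" using t1 L1 unfolding L_def by (intro mult_left_mono) auto
        then show ?thesis using e2 L1 D0 by (intro mult_mono) (auto simp: L_def)
      qed
      also have "\<dots> = 9 * L * D / (A^2 * real n^2)"
        using A0 npos by (simp add: c_def field_simps power2_eq_square power4_eq_xxxx)
      finally show ?thesis .
    qed
    have PB1': "9 * L * D / (A^2 * real n^2) \<le> K1 / real n ^ 2"
    proof -
      have "9 * L * D / (A^2 * real n^2) = (9 * L * D / A^2) / real n ^ 2" by (simp add: field_simps)
      also have "\<dots> \<le> K1 / real n ^ 2" using D0 npos by (intro divide_right_mono) (auto simp: K1_def)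
      finally show ?thesis .
    qed
    have probU: "prob {\<omega>\<in>space M. ct n \<omega> > tp} \<le> 9 * L * D / (A^2 * real n^2)"
      using ct_tail[OF tp1 x10 condA] PB1 by linarith
    have probG: "prob {\<omega>\<in>space M. \<not> Gd \<omega> tp x1} \<le> 9 * L * D / (A^2 * real n^2)"
      using badG[OF tp1 x10] PB1 by linarith
    define y0 where "y0 = c - w"
    define s0 where "s0 = nat \<lfloor>y0\<rfloor>"
    have y01: "y0 \<ge> 1" using w_le c_ge_n n2 by (simp add: y0_def)
    have s0_1: "s0 \<ge> 1" using y01 unfolding s0_def by linarith
    have s0_le: "real s0 \<le> y0" using y01 unfolding s0_def by linarith
    have e_ge: "real n - AA * real s0 \<ge> P / 4"
    proof -
      have "A * real s0 \<le> A * y0" using s0_le A0 by (intro mult_left_mono) auto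
      also have "A * y0 = real n - P / 4" using A0 by (simp add: y0_def c_def w_def field_simps)
      finally show ?thesis unfolding A_def by linarith
    qed
    have probC: "prob {\<omega>\<in>space M. n \<le> cnt (Z \<omega>) m 0 s0} \<le> D / real n ^ 2"
    proof -
      have e0: "real n - AA * real s0 \<ge> 0" using e_ge P0 by linarith
      have "prob {\<omega>\<in>space M. n \<le> cnt (Z \<omega>) m 0 s0} \<le> exp (-2 * (real n - AA * real s0)\<^sup>2 / real s0)"
        by (rule cnt_big[OF m s0_1 e0])
      also have "\<dots> \<le> exp (- \<kappa> * real n powr (2 * \<delta>))"
      proof -
        have s0pos: "real s0 > 0" using s0_1 by simp
        have s0c: "real s0 \<le> c" using s0_le w1 by (simp add: y0_def)
        have "(P/4)^2 \<le> (real n - AA * real s0)^2" using e_ge P0 by (intro power_mono) auto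
        then have "2 * (P/4)^2 / c \<le> 2 * (real n - AA * real s0)^2 / real s0"
          using s0pos s0c by (intro frac_le) auto
        moreover have "2 * (P/4)^2 / c = A / 8 * real n powr (2 * \<delta>)"
          using A0 npos P2 by (simp add: c_def field_simps power2_eq_square)
        moreover have "\<kappa> * real n powr (2 * \<delta>) \<le> A / 8 * real n powr (2 * \<delta>)"
        proof -
          have "L^2 \<ge> 1" using L1 by (simp add: one_le_power)
          then have "8 \<le> 64 * L^2" by linarith
          then have "\<kappa> \<le> A / 8" using A0 unfolding \<kappa>_def by (intro divide_left_mono) auto
          then show ?thesis by (intro mult_right_mono) auto
        qed
        ultimately show ?thesis by simp
      qed
      also have "\<dots> \<le> D / real n ^ 4" by (rule expB)
      also have "\<dots> \<le> D / real n ^ 2"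
        using D0 n2 by (intro divide_left_mono) (auto intro!: power_increasing mult_pos_pos)
      finally show ?thesis .
    qed
    have probL: "prob {\<omega>\<in>space M. real (ct n \<omega>) < y0} \<le> K1 / real n ^ 2"
    proof -
      have "prob {\<omega>\<in>space M. real (ct n \<omega>) < y0} \<le>
            prob ({\<omega>\<in>space M. \<not> Gd \<omega> tp x1} \<union> {\<omega>\<in>space M. n \<le> cnt (Z \<omega>) m 0 (nat \<lfloor>y0\<rfloor>)})"
        by (rule finite_measure_mono[OF ct_lower_event[OF x10 condA m(1)]]) (unfold Gd_def, measurable)
      also have "\<dots> \<le> prob {\<omega>\<in>space M. \<not> Gd \<omega> tp x1} + prob {\<omega>\<in>space M. n \<le> cnt (Z \<omega>) m 0 s0}"
        unfolding s0_def by (rule measure_Un_le) (unfold Gd_def, measurable)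
      also have "\<dots> \<le> 9 * L * D / (A^2 * real n^2) + D / real n ^ 2" using probG probC by linarith
      also have "\<dots> = K1 / real n ^ 2" using npos by (simp add: K1_def field_simps)
      finally show ?thesis .
    qed
    define t0 where "t0 = nat \<lceil>4 * L / A\<rceil>"
    define N where "N = nat \<lceil>2 * c\<rceil> + t0"
    have N_ge: "real N \<ge> 2 * c" "real N \<ge> 4 * L / A" unfolding N_def t0_def by linarith+
    have N_le: "real N \<le> 3 * c"
    proof -
      have "real N \<le> 2 * c + 1 + (4 * L / A + 1)" unfolding N_def t0_def
        using c_ge_n npos A0 L1 by (simp add: of_nat_add) linarith
      then show ?thesis using n3 c_ge_n by linarith
    qed
    have tpN: "tp \<le> N" using tp_2c N_ge(1) by linarith
    have tail: "prob {\<omega>\<in>space M. ct n \<omega> > t} \<le> K * q ^ t" if tN: "t \<ge> N" for t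
    proof -
      have t2c: "real t \<ge> 2 * c" and t4: "real t \<ge> 4 * L / A" using tN N_ge by linarith+
      have tpos: "real t > 0" using t2c c_ge_n npos by linarith
      have t_1: "t \<ge> 1" using tpos by simp
      define xt where "xt = A * real t / (2 * L) - 1"
      have xt_ge: "xt \<ge> A * real t / (4 * L)"
      proof -
        have "A * real t \<ge> 4 * L" using t4 A0 by (simp add: field_simps)
        then show ?thesis using L1 by (simp add: xt_def field_simps)
      qed
      have "A * real t / (4 * L) \<ge> 0" using A0 L1 tpos by simp
      then have xt0: "xt \<ge> 0" using xt_ge by linarith
      have cond: "AA * real t - real l * (xt + 1) \<ge> real n"
      proof -
        have "real l * (xt + 1) = A * real t / 2" using L1 by (simp add: xt_def L_def field_simps)
        moreover have "A * real t \<ge> 2 * real n" using t2c A0 by (simp add: c_def field_simps)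
        ultimately show ?thesis unfolding A_def by linarith
      qed
      have "prob {\<omega>\<in>space M. ct n \<omega> > t} \<le> real l * (real t + 1)^2 * exp (-2 * xt\<^sup>2 / real t)"
        by (rule ct_tail[OF t_1 xt0 cond])
      also have "\<dots> \<le> L * ((real t + 1)^2 * exp (- \<beta> * real t))"
      proof -
        have "(A * real t / (4 * L))^2 \<le> xt^2" using xt_ge A0 L1 tpos by (intro power_mono) auto
        then have "2 * (A * real t / (4 * L))^2 / real t \<le> 2 * xt\<^sup>2 / real t"
          using tpos by (intro divide_right_mono) auto
        moreover have "2 * (A * real t / (4 * L))^2 / real t = \<beta> * real t"
          using tpos L1 by (simp add: \<beta>_def field_simps power2_eq_square)
        ultimately have "exp (-2 * xt\<^sup>2 / real t) \<le> exp (- \<beta> * real t)" by simp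
        then show ?thesis unfolding L_def by (simp add: mult.assoc mult_left_mono)
      qed
      also have "\<dots> \<le> L * (C * q ^ t)" using C[of t] L1 by (intro mult_left_mono) (auto simp: q_def)
      finally show ?thesis by (simp add: K_def mult.assoc)
    qed
    have EI: "integrable M (\<lambda>\<omega>. real (ct n \<omega>))"
      and EU: "expectation (\<lambda>\<omega>. real (ct n \<omega>)) \<le> real tp + real N * prob {\<omega>\<in>space M. ct n \<omega> > tp} + K / (1 - q)"
      using exp_upper[OF tpN q0 K0 tail] by auto
    define E where "E = expectation (\<lambda>\<omega>. real (ct n \<omega>))"
    have E_up: "E \<le> c + 3 * w"
    proof -
      have "real N * prob {\<omega>\<in>space M. ct n \<omega> > tp} \<le> 3 * c * (K1 / real n ^ 2)"
        using N_le probU PB1' by (intro mult_mono) auto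
      also have "3 * c * (K1 / real n ^ 2) = 3 * K1 / (A * real n)"
        using npos A0 by (simp add: c_def field_simps power2_eq_square)
      also have "\<dots> \<le> 1" using n4 A0 npos by (simp add: field_simps)
      finally have "real N * prob {\<omega>\<in>space M. ct n \<omega> > tp} \<le> 1" .
      then show ?thesis using EU tp_le w2 unfolding E_def KQ_def by linarith
    qed
    have E_lo: "E \<ge> c - 2 * w"
    proof -
      have y00: "y0 \<ge> 0" using y01 by simp
      have "E \<ge> y0 * (1 - prob {\<omega>\<in>space M. real (ct n \<omega>) < y0})"
        unfolding E_def by (rule exp_lower[OF EI y00])
      moreover have "y0 * (1 - prob {\<omega>\<in>space M. real (ct n \<omega>) < y0}) \<ge> y0 * (1 - K1 / real n ^ 2)"
        using probL y00 by (intro mult_left_mono) auto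
      moreover have "y0 * (K1 / real n ^ 2) \<le> c * (K1 / real n ^ 2)"
        using w1 K10 by (intro mult_right_mono) (auto simp: y0_def)
      moreover have "c * (K1 / real n ^ 2) = K1 / (A * real n)"
        using npos A0 by (simp add: c_def field_simps power2_eq_square)
      moreover have "K1 / (A * real n) \<le> 1"
        using n4 A0 npos K10 by (simp add: field_simps)
      ultimately show ?thesis using w1 by (simp add: y0_def algebra_simps)
    qed
    have sub: "{\<omega>\<in>space M. \<bar>real (ct n \<omega>) - E\<bar> > real n powr (1/2 + \<delta>) / AA} \<subseteq>
          {\<omega>\<in>space M. real (ct n \<omega>) < y0} \<union> {\<omega>\<in>space M. ct n \<omega> > tp}"
    proof
      fix \<omega> assume w: "\<omega> \<in> {\<omega>\<in>space M. \<bar>real (ct n \<omega>) - E\<bar> > real n powr (1/2 + \<delta>) / AA}"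
      have thr: "real n powr (1/2 + \<delta>) / AA = 4 * w" using A0 by (simp add: w_def P_def A_def)
      show "\<omega> \<in> {\<omega>\<in>space M. real (ct n \<omega>) < y0} \<union> {\<omega>\<in>space M. ct n \<omega> > tp}"
      proof (rule ccontr)
        assume "\<not> ?thesis"
        then have "real (ct n \<omega>) \<ge> y0" "real (ct n \<omega>) \<le> real tp" using w by auto
        then have "\<bar>real (ct n \<omega>) - E\<bar> \<le> 4 * w" using E_up E_lo tp_le w1 by (simp add: y0_def abs_le_iff)
        then show False using w thr by auto
      qed
    qed
    have "prob {\<omega>\<in>space M. \<bar>real (ct n \<omega>) - E\<bar> > real n powr (1/2 + \<delta>) / AA} \<le>
          prob ({\<omega>\<in>space M. real (ct n \<omega>) < y0} \<union> {\<omega>\<in>space M. ct n \<omega> > tp})"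
      by (rule finite_measure_mono[OF sub]) measurable
    also have "\<dots> \<le> prob {\<omega>\<in>space M. real (ct n \<omega>) < y0} + prob {\<omega>\<in>space M. ct n \<omega> > tp}"
      by (rule measure_Un_le) measurable
    also have "\<dots> \<le> 2 * K1 / real n ^ 2" using probL probU PB1' by simp
    also have "\<dots> \<le> 2 * AA / real n"
    proof -
      have "K1 \<le> A * real n" using n4 A0 K10 by (simp add: field_simps)
      then show ?thesis using npos unfolding A_def by (simp add: field_simps power2_eq_square)
    qed
    finally show "prob {\<omega>\<in>space M. \<bar>real (ct n \<omega>) - expectation (\<lambda>\<omega>'. real (ct n \<omega>'))\<bar>
             > real n powr (1/2 + \<delta>) / AA} \<le> 2 * AA / real n" unfolding E_def .
  qed
qed

end

theorem theorem3:
  fixes M :: "'a measure" and z :: "nat \<Rightarrow> nat \<Rightarrow> 'a \<Rightarrow> bool"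
    and l :: nat and p :: "nat \<Rightarrow> real" and \<delta> :: real
  assumes "prob_space M"
    and "l \<ge> 1"
    and p_range: "\<forall>i\<in>{1..l}. 0 \<le> p i \<and> p i < 1"
    and z_meas: "\<forall>t i. z t i \<in> measurable M (count_space UNIV)"
    and z_indep: "prob_space.indep_vars M (\<lambda>_. count_space UNIV) (\<lambda>(t, i). z t i)
                    {(t, i). 1 \<le> t \<and> 1 \<le> i \<and> i \<le> l}"
    and z_distr: "\<forall>t i. 1 \<le> t \<longrightarrow> 1 \<le> i \<longrightarrow> i \<le> l \<longrightarrow>
                    measure M {\<omega> \<in> space M. z t i \<omega>} = 1 - p i"
    and unique_worst: "\<exists>m\<in>{1..l}. \<forall>i\<in>{1..l}. i \<noteq> m \<longrightarrow> p i < p m"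
    and "0 < \<delta>" and "\<delta> < 1/2"
  defines "A \<equiv> 1 - Max (p ` {1..l})"
  shows "\<forall>\<^sub>F n in sequentially.
     measure M {\<omega> \<in> space M.
        \<bar>real (completion_time (\<lambda>t i. z t i \<omega>) l n)
          - (\<integral>\<omega>'. real (completion_time (\<lambda>t i. z t i \<omega>') l n) \<partial>M)\<bar>
        > real n powr (1/2 + \<delta>) / A}
     \<le> 2 * A / real n + 2 * A * real n powr (2 * \<delta>) / (real n ^ 2 - real n powr (1 + 2 * \<delta>))"
proof -
  interpret N: netw M z l p
    by (rule netw.intro[OF assms(1)], rule netw_axioms.intro) (use assms in auto)
  have AA: "N.AA = A" by (simp add: A_def N.AA_def)
  have A0: "A > 0" using N.AA_facts(1) AA by simp
  have ev1: "\<forall>\<^sub>F n in sequentially.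
     measure M {\<omega> \<in> space M.
        \<bar>real (completion_time (\<lambda>t i. z t i \<omega>) l n)
          - (\<integral>\<omega>'. real (completion_time (\<lambda>t i. z t i \<omega>') l n) \<partial>M)\<bar>
        > real n powr (1/2 + \<delta>) / A} \<le> 2 * A / real n"
    using N.conc[OF assms(8,9)] unfolding AA .
  have ev2: "\<forall>\<^sub>F n in sequentially.
      2 * A / real n \<le> 2 * A / real n + 2 * A * real n powr (2 * \<delta>) / (real n ^ 2 - real n powr (1 + 2 * \<delta>))"
  proof (rule eventually_sequentiallyI[of 1])
    fix n :: nat assume n: "1 \<le> n"
    have "real n powr (1 + 2 * \<delta>) \<le> real n powr 2" using n assms(9) by (intro powr_mono) auto
    also have "real n powr 2 = real n ^ 2" by simp
    finally have "0 \<le> real n ^ 2 - real n powr (1 + 2 * \<delta>)" by simp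
    then have "0 \<le> 2 * A * real n powr (2 * \<delta>) / (real n ^ 2 - real n powr (1 + 2 * \<delta>))"
      using A0 by (intro divide_nonneg_nonneg) auto
    then show "2 * A / real n \<le> 2 * A / real n + 2 * A * real n powr (2 * \<delta>) / (real n ^ 2 - real n powr (1 + 2 * \<delta>))"
      by simp
  qed
  show ?thesis using ev1 ev2 by eventually_elim (rule order_trans)
qed

end
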